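(* Let $a<b$ be real numbers and let $\gamma:[a,b]\to\mathbb{E}^2$ be a regular smooth parametric curve, i.e. $\gamma$ has a continuous derivative vector $\gamma'(t)$ on $[a,b]$ with $\gamma'(t)\neq0$ for all $t\in[a,b]$. For $t\in[a,b]$ let $L(t)$ be the length of the arc of $\gamma$ corresponding to parameter values in $[a,t]$. For $t\in(a,b)$ let $T(t)$ be the set of $\tau\in(a,t]$ such that the vector $\gamma'(\tau)$ is collinear to the vector $\gamma(t)-\gamma(a)$. Then $$\varlimsup_{t\to a}\frac{\sup\{L(\tau)\,:\,\tau\in T(t)\}}{L(t)}\ \geq\ \frac1e.$$
   Context: Any vector is considered collinear to the zero vector, so $T(t)=(a,t]$ when $\gamma(t)=\gamma(a)$. Derivatives at the endpoints $a$ and $b$ are one-sided. Limits at $a$ are right-hand limits. *)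

theory Defs
  imports "HOL-Analysis.Analysis"
begin

definition arc_length :: "(real \<Rightarrow> real^2) \<Rightarrow> real \<Rightarrow> real \<Rightarrow> real" where
  "arc_length g' a t = integral {a..t} (\<lambda>s. norm (g' s))"

definition collinear_params ::
  "(real \<Rightarrow> real^2) \<Rightarrow> (real \<Rightarrow> real^2) \<Rightarrow> real \<Rightarrow> real \<Rightarrow> real set" where
  "collinear_params g g' a t = {\<tau> \<in> {a<..t}. collinear {0, g' \<tau>, g t - g a}}"

end

theory Submission
  imports Defs
begin


lemma sum_shift_identity:
  fixes u :: "nat \<Rightarrow> real"
  assumes "N \<ge> 1"
  shows "(\<Sum>j<M. u (j+N) - u (j+1)) = (\<Sum>k=1..<N. u (M+k) - u k)"
proof (induction M)
  case 0
  then show ?case by simp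
next
  case (Suc M)
  have tel: "(\<Sum>k=1..<N. u (Suc M+k) - u (M+k)) = u (M+N) - u (M+1)"
    using sum_Suc_diff'[of 1 N "\<lambda>k. u (M+k)"] assms by (simp add: add.commute)
  have "(\<Sum>k=1..<N. u (Suc M+k) - u k) = (\<Sum>k=1..<N. u (M+k) - u k) + (\<Sum>k=1..<N. u (Suc M+k) - u (M+k))"
    by (simp add: sum.distrib[symmetric])
  then show ?case using Suc tel by (simp add: add.commute)
qed

lemma sum_shift_bound:
  fixes u :: "nat \<Rightarrow> real"
  assumes "1 \<le> N" "N \<le> M" and mono: "\<And>i j. i \<le> j \<Longrightarrow> j < M+N \<Longrightarrow> u i \<le> u j"
  shows "(\<Sum>j<M. u (j+N) - u (j+1)) \<ge> real (N-1) * (u M - u N)"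
proof -
  have "(\<Sum>k=1..<N. u M - u N) \<le> (\<Sum>k=1..<N. u (M+k) - u k)"
  proof (rule sum_mono)
    fix k assume k: "k \<in> {1..<N}"
    have "u M \<le> u (M+k)" using mono[of M "M+k"] k by auto
    moreover have "u k \<le> u N" using mono[of k N] k assms by auto
    ultimately show "u M - u N \<le> u (M+k) - u k" by simp
  qed
  then show ?thesis using sum_shift_identity[OF assms(1), of u M] by simp
qed

lemma core:
  fixes p q p' q' :: "real \<Rightarrow> real" and a e c :: real
  assumes ae: "a < e" and c0: "0 < c" and ce: "c * exp 1 < 1"
    and pa: "p a = 0" and pc: "continuous_on {a..e} p"
    and dp: "\<And>t. a < t \<Longrightarrow> t < e \<Longrightarrow> (p has_real_derivative p' t) (at t)"
    and dq: "\<And>t. a < t \<Longrightarrow> t < e \<Longrightarrow> (q has_real_derivative q' t) (at t)"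
    and pp: "\<And>t. a < t \<Longrightarrow> t < e \<Longrightarrow> p' t > 0"
    and lim: "((\<lambda>t. q t / p t) \<longlongrightarrow> 0) (at_right a)"
    and hyp: "\<And>\<tau> t. a < \<tau> \<Longrightarrow> \<tau> \<le> t \<Longrightarrow> t < e \<Longrightarrow> c * p t < p \<tau> \<Longrightarrow> q' \<tau> * p t - p' \<tau> * q t > 0"
  shows False
proof -
  define \<sigma> where "\<sigma> t = q t / p t" for t
  have c1: "c < 1" using ce c0 by (smt (verit) exp_ge_add_one_self mult_less_cancel_left2)
  have pmono: "p x < p y" if "a \<le> x" "x < y" "y \<le> e" for x y
  proof (rule DERIV_pos_imp_increasing_open[OF that(2)])
    fix z assume "x < z" "z < y"
    then show "\<exists>d. DERIV p z :> d \<and> d > 0" using dp pp that by (meson le_less_trans less_le_trans)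
  next
    show "continuous_on {x..y} p" using that by (intro continuous_on_subset[OF pc]) auto
  qed
  have ppos: "p t > 0" if "a < t" "t \<le> e" for t using pmono[of a t] that pa by simp
  have dsig: "(\<sigma> has_real_derivative (q' t * p t - q t * p' t) / (p t)^2) (at t)" if "a < t" "t < e" for t
    unfolding \<sigma>_def using dp[OF that] dq[OF that] ppos[of t] that
    by (auto intro!: derivative_eq_intros simp: power2_eq_square)
  have dsigpos: "(q' t * p t - q t * p' t) / (p t)^2 > 0" if "a < t" "t < e" for t
  proof -
    have "c * p t < p t" using c1 ppos[of t] that by simp
    then have "q' t * p t - p' t * q t > 0" using hyp[of t t] that by simp
    then show ?thesis using ppos[of t] that by (simp add: mult.commute)
  qed
  have smono: "\<sigma> x < \<sigma> y" if "a < x" "x < y" "y < e" for x y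
  proof (rule DERIV_pos_imp_increasing_open[OF that(2)])
    fix z assume "x < z" "z < y"
    then show "\<exists>d. DERIV \<sigma> z :> d \<and> d > 0" using dsig dsigpos that by (meson less_trans)
  next
    have "\<forall>z\<in>{x..y}. isCont \<sigma> z" using dsig that
      by (metis DERIV_isCont atLeastAtMost_iff le_less_trans less_le_trans)
    then show "continuous_on {x..y} \<sigma>" by (simp add: continuous_at_imp_continuous_on)
  qed
  have lim': "(\<sigma> \<longlongrightarrow> 0) (at_right a)" using lim unfolding \<sigma>_def .
  have snn: "\<sigma> t \<ge> 0" if "a < t" "t < e" for t
  proof (rule ccontr)
    assume "\<not> \<sigma> t \<ge> 0"
    then have "eventually (\<lambda>s. \<sigma> t < \<sigma> s) (at_right a)" using order_tendstoD(1)[OF lim', of "\<sigma> t"] by simp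
    then obtain b where b: "b > a" "\<And>s. a < s \<Longrightarrow> s < b \<Longrightarrow> \<sigma> t < \<sigma> s"
      unfolding eventually_at_right_field by blast
    define s where "s = (a + min b t) / 2"
    have "a < s" "s < b" "s < t" using b(1) that unfolding s_def by auto
    then have "\<sigma> t < \<sigma> s" "\<sigma> s < \<sigma> t" using b(2) smono[of s t] that by auto
    then show False by simp
  qed
  define L where "L = - ln c"
  have L1: "L > 1"
  proof -
    have "c < exp (-1)" using ce by (simp add: exp_minus field_simps)
    then have "ln c < -1" using c0 by (metis ln_exp ln_less_cancel_iff exp_gt_zero)
    then show ?thesis unfolding L_def by simp
  qed
  have expL: "exp L = 1 / c" unfolding L_def using c0 by (simp add: exp_minus inverse_eq_divide)
  obtain N :: nat where N: "real N * (L - 1) > L"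
  proof -
    obtain N :: nat where "L / (L - 1) < real N" using reals_Archimedean2 by blast
    then have "real N * (L - 1) > L" using L1 by (simp add: field_simps)
    then show ?thesis using that by blast
  qed
  have N1: "N \<ge> 1" using N L1 by (cases N) auto
  define l where "l = L / real N"
  have l0: "l > 0" unfolding l_def using L1 N1 by simp
  have lN: "l * real N = L" unfolding l_def using N1 by simp
  define lam where "lam = l * (real N - 1)"
  have lam1: "lam > 1"
  proof -
    have "L * (real N - 1) > real N" using N by (simp add: algebra_simps)
    then show ?thesis unfolding lam_def l_def using N1 by (simp add: field_simps)
  qed
  have pe: "p e > 0" using ppos[of e] ae by simp
  define Z where "Z = c * p e / 2"
  have Z0: "Z > 0" unfolding Z_def using c0 pe by simp
  have Zc: "Z / c < p e" unfolding Z_def using c0 pe by simp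
  have exist: "\<exists>t. a < t \<and> t < e \<and> p t = x" if hx: "0 < x" "x < p e" for x
  proof -
    obtain t where t: "a \<le> t" "t \<le> e" "p t = x" using IVT'[of p a x e] pa hx ae pc by auto
    then show ?thesis using hx pa by (intro exI[of _ t]) (auto simp: order.order_iff_strict)
  qed
  define pinv where "pinv x = (SOME t. a < t \<and> t < e \<and> p t = x)" for x
  have pinv: "a < pinv x \<and> pinv x < e \<and> p (pinv x) = x" if "0 < x" "x < p e" for x
    unfolding pinv_def using someI_ex[OF exist[OF that]] .
  have pinv_mono: "pinv x < pinv y" if "0 < x" "x < y" "y < p e" for x y
  proof (rule ccontr)
    assume "\<not> pinv x < pinv y"
    then have "p (pinv y) \<le> p (pinv x)" using pmono[of "pinv y" "pinv x"] pinv[of x] pinv[of y] that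
      by (cases "pinv x = pinv y") auto
    then show False using pinv[of x] pinv[of y] that by auto
  qed
  have pinv_le: "pinv x < t" if "0 < x" "x < p e" "a < t" "t \<le> e" "x < p t" for x t
  proof (rule ccontr)
    assume "\<not> pinv x < t"
    then have "p t \<le> p (pinv x)" using pmono[of t "pinv x"] pinv[of x] that
      by (cases "pinv x = t") auto
    then show False using pinv[of x] that by auto
  qed
  define T0 where "T0 = pinv Z"
  have ZZ: "Z < p e" unfolding Z_def using c1 pe c0 by simp
  have T0: "a < T0" "T0 < e" "p T0 = Z" using pinv[of Z] Z0 ZZ unfolding T0_def by auto
  define s0 where "s0 = \<sigma> T0"
  have s0: "s0 > 0"
  proof -
    have "\<sigma> ((a + T0)/2) \<ge> 0" using snn T0 by simp
    moreover have "\<sigma> ((a + T0)/2) < \<sigma> T0" using smono T0 by simp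
    ultimately show ?thesis unfolding s0_def by simp
  qed
  define eps where "eps = (lam - 1) * s0 / lam"
  have eps0: "eps > 0" unfolding eps_def using lam1 s0 by simp
  obtain b where b: "b > a" "\<And>s. a < s \<Longrightarrow> s < b \<Longrightarrow> \<sigma> s < eps"
    using order_tendstoD(2)[OF lim' eps0] unfolding eventually_at_right_field by blast
  define ss where "ss = min ((a+b)/2) ((a+e)/2)"
  have ss: "a < ss" "ss < e" "ss < b" unfolding ss_def using b(1) ae by (auto simp: min_def)
  define xs where "xs = p ss"
  have xs0: "xs > 0" unfolding xs_def using ppos ss by simp
  have small: "\<sigma> (pinv x) < eps" if "0 < x" "x < xs" "x < p e" for x
  proof -
    have "pinv x < ss" using pinv_le[of x ss] that ss unfolding xs_def by simp
    then show ?thesis using b(2) pinv[of x] that ss by simp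
  qed
  obtain K :: nat where K: "ln (Z / xs) / l < real K" using reals_Archimedean2 by blast
  define M where "M = N + K"
  define x where "x j = Z * exp (l * (real j - real M))" for j :: nat
  have x0: "x j > 0" for j unfolding x_def using Z0 by simp
  have xN: "x (j + N) = x j / c" for j
  proof -
    have "x (j+N) = Z * (exp (l * (real j - real M)) * exp (l * real N))"
      unfolding x_def by (simp add: exp_add[symmetric] algebra_simps)
    then show ?thesis using lN expL unfolding x_def by simp
  qed
  have xlt: "x j < p e" if "j < M + N" for j
  proof -
    have "l * (real j - real M) < l * real N" using that l0 by simp
    then have "exp (l * (real j - real M)) < exp L" using lN by simp
    then have "Z * exp (l * (real j - real M)) < Z * (1 / c)" using expL Z0 mult_strict_left_mono by metis
    then have "x j < Z / c" unfolding x_def by simp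
    then show ?thesis using Zc by simp
  qed
  have xmono: "x i < x j" if "i < j" for i j unfolding x_def using that l0 Z0 by simp
  have xM: "x M = Z" unfolding x_def by simp
  have xNs: "x N < xs"
  proof -
    have "ln (Z / xs) < l * real K" using K l0 by (simp add: field_simps)
    then have "Z / xs < exp (l * real K)" using Z0 xs0 by (metis exp_less_cancel_iff exp_ln divide_pos_pos)
    then have "Z < xs * exp (l * real K)" using xs0 by (simp add: field_simps)
    moreover have "x N = Z / exp (l * real K)" unfolding x_def M_def by (simp add: exp_minus field_simps)
    ultimately show ?thesis by (simp add: divide_less_eq mult.commute)
  qed
  define t where "t j = pinv (x j)" for j
  define u where "u j = \<sigma> (t j)" for j
  have tj: "a < t j" "t j < e" "p (t j) = x j" if "j < M + N" for j
    using pinv[of "x j"] x0 xlt[OF that] unfolding t_def by auto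
  have tmono: "t i < t j" if "i < j" "j < M + N" for i j
    unfolding t_def using pinv_mono[of "x i" "x j"] x0 xmono xlt that by auto
  have umono: "u i \<le> u j" if "i \<le> j" "j < M + N" for i j
    using smono[of "t i" "t j"] tmono[of i j] tj[of i] tj[of j] that unfolding u_def
    by (cases "i = j") auto
  have uM: "u M = s0" unfolding u_def t_def xM s0_def T0_def ..
  have uN: "u N < eps" unfolding u_def t_def using small[of "x N"] x0 xNs xlt[of N] N1 M_def by simp
  have u0: "u 0 \<ge> 0" unfolding u_def using snn tj[of 0] N1 by simp
  have key: "u (j+1) - u j \<ge> l * (u (j+N) - u (j+1))" if jM: "j < M" for j
  proof -
    have j1: "j+1 < M+N" "j < M+N" "j+N < M+N" using jM N1 by auto
    define t0 where "t0 = t j"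
    define t1 where "t1 = t (j+1)"
    define T where "T = t (j+N)"
    have t01: "t0 < t1" unfolding t0_def t1_def using tmono j1 by simp
    have t1T: "t1 \<le> T" unfolding t1_def T_def using tmono[of "j+1" "j+N"] j1 N1
      by (cases "N = 1") auto
    have ht0: "a < t0" "t0 < e" "p t0 = x j" using tj[of j] j1 unfolding t0_def by auto
    have ht1: "a < t1" "t1 < e" "p t1 = x (j+1)" using tj[of "j+1"] j1 unfolding t1_def by auto
    have hT: "a < T" "T < e" "p T = x (j+N)" using tj[of "j+N"] j1 unfolding T_def by auto
    have dln: "((\<lambda>t. ln (p t)) has_real_derivative p' z / p z) (at z)" if "a < z" "z < e" for z
      using dp[OF that] ppos[of z] that by (auto intro!: derivative_eq_intros)
    obtain \<theta> where th: "t0 < \<theta>" "\<theta> < t1"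
      "(\<sigma> t1 - \<sigma> t0) * (p' \<theta> / p \<theta>) = (ln (p t1) - ln (p t0)) * ((q' \<theta> * p \<theta> - q \<theta> * p' \<theta>) / (p \<theta>)^2)"
    proof -
      have "\<exists>c. t0 < c \<and> c < t1 \<and> (\<sigma> t1 - \<sigma> t0) * (p' c / p c) = (ln (p t1) - ln (p t0)) * ((q' c * p c - q c * p' c) / (p c)^2)"
      proof (rule GMVT'[OF t01])
        fix z assume "t0 \<le> z" "z \<le> t1"
        then have z: "a < z" "z < e" using ht0 ht1 by auto
        show "isCont \<sigma> z" using dsig[OF z] by (rule DERIV_isCont)
        show "isCont (\<lambda>t. ln (p t)) z" using dln[OF z] by (rule DERIV_isCont)
      next
        fix z assume "t0 < z" "z < t1"
        then have z: "a < z" "z < e" using ht0 ht1 by auto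
        show "DERIV \<sigma> z :> (q' z * p z - q z * p' z) / (p z)^2" using dsig[OF z] .
        show "((\<lambda>t. ln (p t)) has_real_derivative p' z / p z) (at z)" using dln[OF z] .
      qed
      then show ?thesis using that by blast
    qed
    have thz: "a < \<theta>" "\<theta> < e" using th ht0 ht1 by auto
    have pth: "p \<theta> > 0" "p' \<theta> > 0" using ppos pp thz by auto
    have lnd: "ln (p t1) - ln (p t0) = l"
    proof -
      have "ln (x (j+1)) = ln Z + l * (real (j+1) - real M)" unfolding x_def using Z0 by (simp add: ln_mult)
      moreover have "ln (x j) = ln Z + l * (real j - real M)" unfolding x_def using Z0 by (simp add: ln_mult)
      ultimately show ?thesis using ht0 ht1 by (simp add: algebra_simps)
    qed
    have eq: "\<sigma> t1 - \<sigma> t0 = l * (q' \<theta> / p' \<theta> - \<sigma> \<theta>)"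
    proof -
      have "(\<sigma> t1 - \<sigma> t0) * (p' \<theta> / p \<theta>) = l * ((q' \<theta> * p \<theta> - q \<theta> * p' \<theta>) / (p \<theta>)^2)"
        using th(3) lnd by simp
      moreover have "\<And>D P P' Q Q'. D * (P' / P) = l * ((Q' * P - Q * P') / P^2) \<Longrightarrow> P > 0 \<Longrightarrow> P' > 0 \<Longrightarrow> D = l * (Q' / P' - Q / P)"
        by (simp add: field_simps power2_eq_square)
      ultimately show ?thesis using pth unfolding \<sigma>_def[of \<theta>] by blast
    qed
    have s1: "\<sigma> \<theta> \<le> \<sigma> t1" using smono[of \<theta> t1] th thz ht1 by simp
    have s2: "q' \<theta> / p' \<theta> > \<sigma> T"
    proof -
      have "c * p T = x j" using hT xN[of j] c0 by simp
      then have "c * p T < p \<theta>" using pmono[of t0 \<theta>] ht0 th thz by simp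
      then have "q' \<theta> * p T - p' \<theta> * q T > 0" using hyp[of \<theta> T] thz th t1T hT by simp
      then show ?thesis using pth ppos[of T] hT unfolding \<sigma>_def by (simp add: field_simps)
    qed
    have "\<sigma> t1 - \<sigma> t0 \<ge> l * (\<sigma> T - \<sigma> t1)" using eq s1 s2 l0
      by (smt (verit) mult_left_mono)
    then show ?thesis unfolding u_def t0_def t1_def T_def .
  qed
  have tel: "(\<Sum>j<M. u (Suc j) - u j) = u M - u 0" by (rule sum_lessThan_telescope)
  have "(\<Sum>j<M. l * (u (j+N) - u (j+1))) \<le> (\<Sum>j<M. u (Suc j) - u j)"
    using key by (intro sum_mono) simp
  then have "l * (\<Sum>j<M. u (j+N) - u (j+1)) \<le> u M - u 0" using tel by (simp add: sum_distrib_left)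
  moreover have "(\<Sum>j<M. u (j+N) - u (j+1)) \<ge> real (N-1) * (u M - u N)"
    using sum_shift_bound[OF N1, of M u] umono M_def by simp
  ultimately have "l * (real (N-1) * (u M - u N)) \<le> u M - u 0"
    using l0 by (smt (verit) mult_left_mono)
  then have "lam * (s0 - u N) \<le> s0" unfolding lam_def using uM u0 N1 by (simp add: of_nat_diff)
  then have "(lam - 1) * s0 \<le> lam * u N" by (simp add: algebra_simps)
  moreover have "lam * u N < lam * eps" using uN lam1 by simp
  moreover have "lam * eps = (lam - 1) * s0" unfolding eps_def using lam1 by simp
  ultimately show False by simp
qed

lemma sign_const:
  fixes f :: "real \<Rightarrow> real"
  assumes "x \<le> y" "continuous_on {x..y} f" "\<And>z. x \<le> z \<Longrightarrow> z \<le> y \<Longrightarrow> f z \<noteq> 0"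
  shows "f x > 0 \<longleftrightarrow> f y > 0"
proof
  assume fx: "f x > 0"
  show "f y > 0"
  proof (rule ccontr)
    assume "\<not> f y > 0"
    then have "- f x \<le> 0" "0 \<le> - f y" using fx by auto
    moreover have "continuous_on {x..y} (\<lambda>z. - f z)" using assms(2) by (intro continuous_intros)
    ultimately obtain z where "x \<le> z" "z \<le> y" "- f z = 0" using IVT'[of "\<lambda>z. - f z" x 0 y] assms(1) by auto
    then show False using assms(3) by auto
  qed
next
  assume fy: "f y > 0"
  show "f x > 0"
  proof (rule ccontr)
    assume "\<not> f x > 0"
    then have "f x \<le> 0" "0 \<le> f y" using fy by auto
    then obtain z where "x \<le> z" "z \<le> y" "f z = 0" using IVT'[of f x 0 y] assms(1,2) by auto
    then show False using assms(3) by auto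
  qed
qed

lemma core2:
  fixes p q p' q' :: "real \<Rightarrow> real" and a e c :: real
  assumes ae: "a < e" and c0: "0 < c" and ce: "c * exp 1 < 1"
    and pa: "p a = 0" and pc: "continuous_on {a..e} p"
    and dp: "\<And>t. a < t \<Longrightarrow> t < e \<Longrightarrow> (p has_real_derivative p' t) (at t)"
    and dq: "\<And>t. a < t \<Longrightarrow> t < e \<Longrightarrow> (q has_real_derivative q' t) (at t)"
    and pp: "\<And>t. a < t \<Longrightarrow> t < e \<Longrightarrow> p' t > 0"
    and p'c: "continuous_on {a<..<e} p'" and q'c: "continuous_on {a<..<e} q'"
    and lim: "((\<lambda>t. q t / p t) \<longlongrightarrow> 0) (at_right a)"
    and hyp: "\<And>\<tau> t. a < \<tau> \<Longrightarrow> \<tau> \<le> t \<Longrightarrow> t < e \<Longrightarrow> c * p t < p \<tau> \<Longrightarrow> q' \<tau> * p t - p' \<tau> * q t \<noteq> 0"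
  shows False
proof -
  define F where "F \<tau> t = q' \<tau> * p t - p' \<tau> * q t" for \<tau> t
  have c1: "c < 1" using ce c0 by (smt (verit) exp_ge_add_one_self mult_less_cancel_left2)
  have pcont: "isCont p t" if "a < t" "t < e" for t using dp[OF that] by (rule DERIV_isCont)
  have qcont: "isCont q t" if "a < t" "t < e" for t using dq[OF that] by (rule DERIV_isCont)
  have ppos: "p t > 0" if "a < t" "t < e" for t
  proof -
    have "p a < p t"
    proof (rule DERIV_pos_imp_increasing_open[OF that(1)])
      fix z assume "a < z" "z < t"
      then show "\<exists>d. DERIV p z :> d \<and> d > 0" using dp pp that by (meson less_trans)
    next
      show "continuous_on {a..t} p" using that by (intro continuous_on_subset[OF pc]) auto
    qed
    then show ?thesis using pa by simp
  qed
  have diag: "F t t \<noteq> 0" if "a < t" "t < e" for t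
    unfolding F_def using hyp[of t t] that c1 ppos[of t] by simp
  have cont_sub: "continuous_on {x..y} f" if "continuous_on {a<..<e} f" "a < x" "y < e" for f x y
    using that by (intro continuous_on_subset[OF that(1)]) auto
  have Fdiag_cont: "continuous_on {x..y} (\<lambda>t. F t t)" if "a < x" "y < e" for x y
  proof -
    have "continuous_on {x..y} p" "continuous_on {x..y} q"
      using pcont qcont that by (auto intro!: continuous_at_imp_continuous_on)
    moreover have "continuous_on {x..y} p'" "continuous_on {x..y} q'" using cont_sub p'c q'c that by auto
    ultimately show ?thesis unfolding F_def by (intro continuous_intros)
  qed
  have sameF: "F \<tau> t > 0 \<longleftrightarrow> F t t > 0"
    if "a < \<tau>" "\<tau> \<le> t" "t < e" "c * p t < p \<tau>" for \<tau> t
  proof (rule sign_const[OF that(2)])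
    have "continuous_on {\<tau>..t} p'" "continuous_on {\<tau>..t} q'" using cont_sub p'c q'c that by auto
    then show "continuous_on {\<tau>..t} (\<lambda>z. F z t)" unfolding F_def by (intro continuous_intros)
  next
    fix z assume z: "\<tau> \<le> z" "z \<le> t"
    have "p \<tau> \<le> p z"
    proof (cases "\<tau> = z")
      case False
      have "p \<tau> < p z"
      proof (rule DERIV_pos_imp_increasing_open[of \<tau> z p])
        show "\<tau> < z" using False z by simp
      next
        fix w assume "\<tau> < w" "w < z"
        then have "a < w" "w < e" using that z by auto
        then show "\<exists>d. DERIV p w :> d \<and> d > 0" using dp pp by blast
      next
        show "continuous_on {\<tau>..z} p" using pcont that z by (auto intro!: continuous_at_imp_continuous_on)
      qed
      then show ?thesis by simp
    qed simp
    then show "F z t \<noteq> 0" unfolding F_def using hyp[of z t] that z by simp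
  qed
  show False
  proof (cases "\<forall>t. a < t \<and> t < e \<longrightarrow> F t t > 0")
    case True
    show False
    proof (rule core[OF ae c0 ce pa pc dp dq pp lim])
      fix \<tau> t assume h: "a < \<tau>" "\<tau> \<le> t" "t < e" "c * p t < p \<tau>"
      then show "q' \<tau> * p t - p' \<tau> * q t > 0" using sameF[OF h] True unfolding F_def by auto
    qed
  next
    case False
    then obtain t0 where t0: "a < t0" "t0 < e" "\<not> F t0 t0 > 0" by blast
    have neg: "F t t < 0" if "a < t" "t < e" for t
    proof -
      have "F t t > 0 \<longleftrightarrow> F t0 t0 > 0"
      proof (cases "t \<le> t0")
        case True
        then show ?thesis using sign_const[OF True Fdiag_cont] diag that t0 by force
      next
        case False
        then have tt: "t0 \<le> t" by simp
        show ?thesis using sign_const[OF tt Fdiag_cont] diag that t0 by force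
      qed
      then show ?thesis using t0 diag[OF that] by auto
    qed
    show False
    proof (rule core[OF ae c0 ce pa pc dp, where q = "\<lambda>t. - q t" and q' = "\<lambda>t. - q' t"])
      fix t assume "a < t" "t < e"
      then show "((\<lambda>t. - q t) has_real_derivative - q' t) (at t)" using dq by (auto intro!: derivative_eq_intros)
    next
      show "((\<lambda>t. - q t / p t) \<longlongrightarrow> 0) (at_right a)" using tendsto_minus[OF lim] by simp
    next
      fix \<tau> t assume h: "a < \<tau>" "\<tau> \<le> t" "t < e" "c * p t < p \<tau>"
      have "F \<tau> t \<noteq> 0" using hyp[OF h] unfolding F_def .
      then have "F \<tau> t < 0" using sameF[OF h] neg[of t] h by (smt (verit) le_less_trans)
      then show "- q' \<tau> * p t - p' \<tau> * - q t > 0" unfolding F_def by simp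
    qed (use pp in auto)
  qed
qed



lemma inner2: "(x::real^2) \<bullet> y = x$1*y$1 + x$2*y$2"
  by (simp add: inner_vec_def sum_2)

lemma norm2: "(norm (x::real^2))^2 = x$1*x$1 + x$2*x$2"
  by (simp add: power2_norm_eq_inner inner2)

lemma collinear2:
  fixes w C :: "real^2"
  assumes "w \<noteq> 0" "w$1 * C$2 - w$2 * C$1 = 0"
  shows "collinear {0, w, C}"
proof -
  have "\<exists>k. C = k *\<^sub>R w"
  proof (cases "w$1 = 0")
    case True
    then have w2: "w$2 \<noteq> 0" using assms(1) by (metis exhaust_2 vec_eq_iff zero_index)
    show ?thesis
      using assms(2) True w2 by (intro exI[of _ "C$2 / w$2"]) (auto simp: vec_eq_iff forall_2 field_simps)
  next
    case False
    show ?thesis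
      using assms(2) False by (intro exI[of _ "C$1 / w$1"]) (auto simp: vec_eq_iff forall_2 field_simps)
  qed
  then show ?thesis by (auto simp: collinear_lemma)
qed

lemma F_identity:
  fixes v w C :: "real^2"
  defines "n \<equiv> (\<chi> i. if i = 1 then - v$2 else v$1) :: real^2"
  shows "(n \<bullet> w) * (v \<bullet> C) - (v \<bullet> w) * (n \<bullet> C) = (norm v)^2 * (w$2 * C$1 - w$1 * C$2)"
  unfolding norm2 inner2 n_def by (simp add: algebra_simps)

lemma inner_deriv:
  fixes g :: "real \<Rightarrow> real^2"
  assumes "(g has_vector_derivative w) F"
  shows "((\<lambda>t. u \<bullet> (g t - c)) has_real_derivative (u \<bullet> w)) F"
proof -
  have "((\<lambda>t. u \<bullet> (g t - c)) has_derivative (\<lambda>h. u \<bullet> (h *\<^sub>R w))) F"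
    using assms unfolding has_vector_derivative_def by (auto intro!: derivative_eq_intros)
  moreover have "(\<lambda>h. u \<bullet> (h *\<^sub>R w)) = (*) (u \<bullet> w)" by (auto simp: mult.commute)
  ultimately show ?thesis unfolding has_field_derivative_def by simp
qed

lemma pointwise_bounds:
  fixes v d :: "real^2" and k th :: real
  assumes "v \<noteq> 0" "norm d < th * norm v" "0 < k" "k * (1 + th) = 1 - th" "th > 0"
  shows "k * norm v * norm (v + d) \<le> v \<bullet> (v + d)"
    and "v \<bullet> (v + d) \<ge> (norm v)^2 * (1 - th)"
    and "norm (v + d) \<ge> norm v * (1 - th)"
proof -
  have nv: "norm v > 0" using assms by simp
  have cs: "\<bar>v \<bullet> d\<bar> \<le> norm v * norm d" by (rule Cauchy_Schwarz_ineq2)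
  have a1: "v \<bullet> (v + d) = (norm v)^2 + v \<bullet> d" by (simp add: inner_add_right power2_norm_eq_inner)
  have a2: "norm v * norm d \<le> norm v * (th * norm v)" using assms(2) nv by simp
  show lb: "v \<bullet> (v + d) \<ge> (norm v)^2 * (1 - th)"
    using a1 cs a2 by (simp add: power2_eq_square algebra_simps)
  have "norm (v + d) \<le> norm v + norm d" by (rule norm_triangle_ineq)
  then have "norm (v + d) \<le> norm v * (1 + th)" using assms(2) by (simp add: algebra_simps)
  then have "k * norm v * norm (v + d) \<le> k * norm v * (norm v * (1 + th))"
    using assms(3) nv by (intro mult_left_mono) auto
  also have "\<dots> = (norm v)^2 * (k * (1 + th))" by (simp add: power2_eq_square algebra_simps)
  also have "\<dots> = (norm v)^2 * (1 - th)" using assms(4) by simp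
  finally show "k * norm v * norm (v + d) \<le> v \<bullet> (v + d)" using lb by simp
  have "norm v \<le> norm (v + d) + norm d" using norm_triangle_ineq4[of "v + d" d] by simp
  then show "norm (v + d) \<ge> norm v * (1 - th)" using assms(2) by (simp add: algebra_simps)
qed

theorem corollary2:
  fixes g g' :: "real \<Rightarrow> real^2" and a b :: real
  assumes "a < b"
    and "\<And>t. t \<in> {a..b} \<Longrightarrow> (g has_vector_derivative g' t) (at t within {a..b})"
    and "continuous_on {a..b} g'"
    and "\<And>t. t \<in> {a..b} \<Longrightarrow> g' t \<noteq> 0"
  shows "Limsup (at_right a)
           (\<lambda>t. ereal (Sup ((arc_length g' a) ` collinear_params g g' a t) / arc_length g' a t))
         \<ge> ereal (1 / exp 1)"
proof (rule ccontr)
  note ab = assms(1) and D = assms(2) and g'c = assms(3) and g'nz = assms(4)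
  define L where "L = arc_length g' a"
  define R where "R t = ereal (Sup (L ` collinear_params g g' a t) / L t)" for t
  assume "\<not> ?thesis"
  then have lt: "Limsup (at_right a) R < ereal (1 / exp 1)" unfolding R_def L_def by simp
  obtain c' where c': "Limsup (at_right a) R < ereal c'" "ereal c' < ereal (1 / exp 1)"
    using ereal_dense2[OF lt] by blast
  define c1 where "c1 = max c' (1 / (2 * exp 1))"
  have c1pos: "c1 > 0" unfolding c1_def by (smt (verit) divide_pos_pos exp_gt_zero max.cobounded2)
  have c1e: "c1 * exp 1 < 1"
  proof -
    have "1 / (2 * exp 1) < 1 / exp (1::real)" by (simp add: field_simps)
    then have "c1 < 1 / exp 1" using c'(2) unfolding c1_def by simp
    then show ?thesis by (simp add: field_simps)
  qed
  have "Limsup (at_right a) R < ereal c1" using c'(1) unfolding c1_def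
    by (meson ereal_less_eq(3) max.cobounded1 order_less_le_trans)
  then have "eventually (\<lambda>t. R t < ereal c1) (at_right a)" by (rule Limsup_lessD)
  then obtain b1 where b1: "b1 > a" "\<And>t. a < t \<Longrightarrow> t < b1 \<Longrightarrow> Sup (L ` collinear_params g g' a t) / L t < c1"
    unfolding eventually_at_right_field R_def by auto
  define v where "v = g' a"
  have v0: "v \<noteq> 0" unfolding v_def using g'nz ab by simp
  define nv where "nv = norm v"
  have nv0: "nv > 0" unfolding nv_def using v0 by simp
  define n :: "real^2" where "n = (\<chi> i. if i = 1 then - v$2 else v$1)"
  define k where "k = (1 + c1 * exp 1) / 2"
  have k: "0 < k" "k < 1" "c1 * exp 1 < k" unfolding k_def using c1e c1pos by (auto simp: add_pos_pos)
  define th where "th = (1 - k) / (1 + k)"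
  have th: "th > 0" "k * (1 + th) = 1 - th" unfolding th_def using k by (auto simp: field_simps)
  obtain \<delta> where \<delta>: "\<delta> > 0" "\<And>s. s \<in> {a..b} \<Longrightarrow> dist s a < \<delta> \<Longrightarrow> dist (g' s) v < th * nv"
  proof -
    have "th * nv > 0" using th nv0 by simp
    then obtain d where "d > 0" "\<forall>x'\<in>{a..b}. dist x' a < d \<longrightarrow> dist (g' x') (g' a) < th * nv"
      using g'c ab unfolding continuous_on_iff by (meson atLeastAtMost_iff less_eq_real_def)
    then show ?thesis using that unfolding v_def by blast
  qed
  define e where "e = min (min (a + \<delta>/2) b1) b"
  have e: "a < e" "e \<le> b" "e \<le> b1" "e < a + \<delta>" unfolding e_def using \<delta>(1) b1(1) ab by auto
  define c where "c = c1 / k"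
  have c: "0 < c" "c * exp 1 < 1" "c * k = c1" unfolding c_def using k c1pos by (auto simp: field_simps)
  define p where "p t = v \<bullet> (g t - g a)" for t
  define q where "q t = n \<bullet> (g t - g a)" for t
  define p' where "p' t = v \<bullet> g' t" for t
  define q' where "q' t = n \<bullet> g' t" for t
  have Dp: "(p has_real_derivative p' t) (at t within {a..b})" if "t \<in> {a..b}" for t
    unfolding p_def p'_def by (rule inner_deriv[OF D[OF that]])
  have Dq: "(q has_real_derivative q' t) (at t within {a..b})" if "t \<in> {a..b}" for t
    unfolding q_def q'_def by (rule inner_deriv[OF D[OF that]])
  have gcont: "continuous_on {a..b} g" by (rule continuous_on_vector_derivative[OF D])
  have pw: "k * nv * norm (g' s) \<le> p' s" "p' s \<ge> nv^2 * (1 - th)" "norm (g' s) \<ge> nv * (1 - th)"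
    if "s \<in> {a..e}" for s
  proof -
    have "s \<in> {a..b}" "dist s a < \<delta>" using that e by (auto simp: dist_real_def)
    then have "norm (g' s - v) < th * norm v" using \<delta>(2) unfolding nv_def by (simp add: dist_norm)
    note pb = pointwise_bounds[OF v0 this k(1) th(2) th(1)]
    show "k * nv * norm (g' s) \<le> p' s" "p' s \<ge> nv^2 * (1 - th)" "norm (g' s) \<ge> nv * (1 - th)"
      using pb unfolding p'_def nv_def by auto
  qed
  have Ip: "(p' has_integral p s) {a..s}" if "s \<in> {a..b}" for s
  proof -
    have "(p' has_integral p s - p a) {a..s}"
    proof (rule fundamental_theorem_of_calculus)
      show "a \<le> s" using that by simp
      fix x assume "x \<in> {a..s}"
      then have "x \<in> {a..b}" using that by auto
      then have "(p has_vector_derivative p' x) (at x within {a..b})"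
        using Dp has_real_derivative_iff_has_vector_derivative by blast
      then show "(p has_vector_derivative p' x) (at x within {a..s})"
        by (rule has_vector_derivative_within_subset) (use that in auto)
    qed
    then show ?thesis unfolding p_def by simp
  qed
  have ncont: "continuous_on {a..s} (\<lambda>r. norm (g' r))" if "s \<le> b" for s
    using that by (intro continuous_intros continuous_on_subset[OF g'c]) auto
  have IL: "((\<lambda>r. norm (g' r)) has_integral L s) {a..s}" if "s \<in> {a..b}" for s
    unfolding L_def arc_length_def using ncont[of s] that
    by (intro integrable_integral integrable_continuous_interval) auto
  have I1: "p s \<le> nv * L s" if "s \<in> {a..b}" for s
  proof (rule has_integral_le[OF Ip[OF that] has_integral_mult_right[OF IL[OF that]]])
    fix x show "p' x \<le> nv * norm (g' x)" unfolding p'_def nv_def by (rule norm_cauchy_schwarz)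
  qed
  have I2: "k * nv * L s \<le> p s" if "s \<in> {a..e}" for s
  proof -
    have sb: "s \<in> {a..b}" using that e by auto
    show ?thesis
    proof (rule has_integral_le[OF has_integral_mult_right[OF IL[OF sb]] Ip[OF sb]])
      fix x assume "x \<in> {a..s}"
      then show "k * nv * norm (g' x) \<le> p' x" using pw(1)[of x] that by auto
    qed
  qed
  have I3: "nv * (1 - th) * (s - a) \<le> L s" if "s \<in> {a..e}" for s
  proof -
    have sb: "s \<in> {a..b}" using that e by auto
    have ci: "((\<lambda>x. nv * (1 - th)) has_integral (nv * (1 - th) * (s - a))) {a..s}"
      using has_integral_const_real[of "nv * (1 - th)" a s] that by (simp add: mult.commute)
    show ?thesis
    proof (rule has_integral_le[OF ci IL[OF sb]])
      fix x assume "x \<in> {a..s}"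
      then show "nv * (1 - th) \<le> norm (g' x)" using pw(3)[of x] that by auto
    qed
  qed
  have Lmono: "L \<tau> \<le> L t" if "a \<le> \<tau>" "\<tau> \<le> t" "t \<le> b" for \<tau> t
    unfolding L_def arc_length_def
  proof (rule integral_subset_le)
    show "{a..\<tau>} \<subseteq> {a..t}" using that by auto
    show "(\<lambda>r. norm (g' r)) integrable_on {a..\<tau>}" using ncont[of \<tau>] that
      by (intro integrable_continuous_interval) auto
    show "(\<lambda>r. norm (g' r)) integrable_on {a..t}" using ncont[of t] that
      by (intro integrable_continuous_interval) auto
  qed auto
  show False
  proof (rule core2[OF e(1) c(1) c(2), of p p' q q'])
    show "p a = 0" unfolding p_def by simp
    show "continuous_on {a..e} p" unfolding p_def using e
      by (intro continuous_intros continuous_on_subset[OF gcont]) auto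
    show "(p has_real_derivative p' t) (at t)" if "a < t" "t < e" for t
      using Dp[of t] that e at_within_Icc_at[of a t b] by auto
    show "(q has_real_derivative q' t) (at t)" if "a < t" "t < e" for t
      using Dq[of t] that e at_within_Icc_at[of a t b] by auto
    show "p' t > 0" if "a < t" "t < e" for t
    proof -
      have "nv^2 * (1 - th) > 0" using nv0 th k by (simp add: th_def field_simps)
      then show ?thesis using pw(2)[of t] that by auto
    qed
    show "continuous_on {a<..<e} p'" unfolding p'_def using e
      by (intro continuous_intros continuous_on_subset[OF g'c]) auto
    show "continuous_on {a<..<e} q'" unfolding q'_def using e
      by (intro continuous_intros continuous_on_subset[OF g'c]) auto
    show "((\<lambda>t. q t / p t) \<longlongrightarrow> 0) (at_right a)"
    proof -
      have aab: "a \<in> {a..b}" using ab by simp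
      have pv: "p' a = nv^2" unfolding p'_def nv_def v_def by (simp add: power2_norm_eq_inner)
      have qv: "q' a = 0" unfolding q'_def n_def v_def by (simp add: inner2)
      have P: "((\<lambda>y. (p y - p a) / (y - a)) \<longlongrightarrow> nv^2) (at_right a)"
        using Dp[OF aab] pv unfolding has_field_derivative_iff at_within_Icc_at_right[OF ab] by simp
      have Q: "((\<lambda>y. (q y - q a) / (y - a)) \<longlongrightarrow> 0) (at_right a)"
        using Dq[OF aab] qv unfolding has_field_derivative_iff at_within_Icc_at_right[OF ab] by simp
      have "((\<lambda>y. ((q y - q a) / (y - a)) / ((p y - p a) / (y - a))) \<longlongrightarrow> 0 / nv^2) (at_right a)"
        using nv0 by (intro tendsto_divide P Q) auto
      then have T: "((\<lambda>y. ((q y - q a) / (y - a)) / ((p y - p a) / (y - a))) \<longlongrightarrow> 0) (at_right a)" by simp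
      have E: "eventually (\<lambda>y. ((q y - q a) / (y - a)) / ((p y - p a) / (y - a)) = q y / p y) (at_right a)"
      proof -
        have "((x / d) / (z / d)) = x / z" if "d \<noteq> 0" for x z d :: real
          using that by (cases "z = 0") (simp_all add: field_simps)
        moreover have "p a = 0" "q a = 0" unfolding p_def q_def by simp_all
        ultimately show ?thesis unfolding eventually_at_right_field
          by (intro exI[of _ "a + 1"]) auto
      qed
      show ?thesis using tendsto_cong[OF E] T by simp
    qed
    show "q' \<tau> * p t - p' \<tau> * q t \<noteq> 0" if h: "a < \<tau>" "\<tau> \<le> t" "t < e" "c * p t < p \<tau>" for \<tau> t
    proof
      assume F0: "q' \<tau> * p t - p' \<tau> * q t = 0"
      define w where "w = g' \<tau>"
      define C where "C = g t - g a"
      have "(n \<bullet> w) * (v \<bullet> C) - (v \<bullet> w) * (n \<bullet> C) = (norm v)^2 * (w$2 * C$1 - w$1 * C$2)"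
        unfolding n_def by (rule F_identity)
      then have "(norm v)^2 * (w$2 * C$1 - w$1 * C$2) = 0"
        using F0 unfolding p_def q_def p'_def q'_def w_def C_def by simp
      then have cr: "w$1 * C$2 - w$2 * C$1 = 0" using v0 by simp
      have w0: "w \<noteq> 0" unfolding w_def using g'nz h e by auto
      have "collinear {0, g' \<tau>, g t - g a}" using collinear2[OF w0 cr] unfolding w_def C_def .
      then have mem: "\<tau> \<in> collinear_params g g' a t" unfolding collinear_params_def using h by auto
      have bdd: "bdd_above (L ` collinear_params g g' a t)"
      proof (rule bdd_aboveI2)
        fix x assume "x \<in> collinear_params g g' a t"
        then show "L x \<le> L t" using Lmono[of x t] h e unfolding collinear_params_def by auto
      qed
      have le1: "L \<tau> \<le> Sup (L ` collinear_params g g' a t)" using cSup_upper[OF imageI[OF mem] bdd] .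
      have th1: "th < 1" unfolding th_def using k by (simp add: field_simps)
      have Lt: "L t > 0"
      proof -
        have "nv * (1 - th) * (t - a) > 0" using nv0 th1 h by simp
        then show ?thesis using I3[of t] h by auto
      qed
      have "Sup (L ` collinear_params g g' a t) / L t < c1" using b1(2)[of t] h e by auto
      then have "Sup (L ` collinear_params g g' a t) < c1 * L t" using Lt by (simp add: divide_less_eq)
      then have A: "L \<tau> < c1 * L t" using le1 by simp
      have tb: "\<tau> \<in> {a..b}" "t \<in> {a..e}" using h e by auto
      have "nv * L \<tau> \<ge> p \<tau>" using I1[OF tb(1)] .
      moreover have "c * p t \<ge> c * (k * nv * L t)" using I2[OF tb(2)] c(1) by simp
      moreover have "c * (k * nv * L t) = nv * (c1 * L t)" using c(3) by (simp add: algebra_simps)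
      ultimately have "nv * L \<tau> > nv * (c1 * L t)" using h(4) by linarith
      then have "L \<tau> > c1 * L t" using nv0 by simp
      then show False using A by simp
    qed
  qed
qed


end
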